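(* Let $k\ge 6$ be an even integer with $k\equiv 0\pmod 3$, let $\mathcal{N}=\{0,1,\dots,2k-1\}$ and let $\mathcal{R}_1=\{R\in\binom{\mathcal{N}}{k}:\sum_{x\in R}x\equiv 1\pmod 3\}$. Then every subset $X\subset\mathcal{N}$ with $1\le |X|\le k-2$ belongs to $\mathcal{D}(\mathcal{R}_1)$, i.e. there exist $R,R'\in\mathcal{R}_1$ with $X=R\setminus R'$.
   Context: $\binom{\mathcal{N}}{k}$ is the family of all $k$-element subsets of $\mathcal{N}$. For a family $\mathcal{F}$, $\mathcal{D}(\mathcal{F})=\{F\setminus F' : F,F'\in\mathcal{F}\}$. *)

theory Defs
  imports Main
begin

definition diff_family :: "'a set set \<Rightarrow> 'a set set" where
  "diff_family F = {A - B | A B. A \<in> F \<and> B \<in> F}"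

end

theory Submission
  imports Defs
begin
lemma A3: fixes u v :: nat assumes "u < 3" "v < 3" shows "(0+u) mod 3 = v \<or> (1+u) mod 3 = v \<or> (2+u) mod 3 = v"
proof -
  have "u = 0 \<or> u = 1 \<or> u = 2" "v = 0 \<or> v = 1 \<or> v = 2" using assms by auto
  then show ?thesis by auto
qed
lemma B3: fixes u v a b :: nat assumes "u < 3" "v < 3" "a<3" "b<3" "a\<noteq>b" shows "(a+a+u) mod 3 = v \<or> (a+b+u) mod 3 = v \<or> (b+b+u) mod 3 = v"
proof -
  have "u = 0 \<or> u = 1 \<or> u = 2" "v = 0 \<or> v = 1 \<or> v = 2" "a = 0 \<or> a = 1 \<or> a = 2" "b = 0 \<or> b = 1 \<or> b = 2" using assms by auto
  then show ?thesis using assms(5) by auto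
qed
lemma modadd: fixes x s :: nat shows "(x + s) mod 3 = (x mod 3 + s mod 3) mod 3"
  by (rule mod_add_eq[symmetric])
lemma modadd2: fixes x y s :: nat shows "(x + y + s) mod 3 = (x mod 3 + y mod 3 + s mod 3) mod 3"
proof -
  have "(x + y + s) mod 3 = ((x+y) mod 3 + s mod 3) mod 3" by (rule mod_add_eq[symmetric])
  also have "(x+y) mod 3 = (x mod 3 + y mod 3) mod 3" by (rule mod_add_eq[symmetric])
  also have "((x mod 3 + y mod 3) mod 3 + s mod 3) mod 3 = (x mod 3 + y mod 3 + s mod 3) mod 3" by (rule mod_add_left_eq)
  finally show ?thesis .
qed

lemma G1:
  fixes S :: "nat set"
  assumes "finite S" "e0\<in>S" "e1\<in>S" "e2\<in>S" "e0 mod 3 = 0" "e1 mod 3 = 1" "e2 mod 3 = 2"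
    "1 \<le> t" "t+2 \<le> card S"
  shows "\<exists>T\<subseteq>S. card T = t \<and> (\<Sum>T) mod 3 = r mod 3"
proof -
  have d: "e0 \<noteq> e1" "e0 \<noteq> e2" "e1 \<noteq> e2" using assms by auto
  have c3: "card {e0,e1,e2} = 3" using d by simp
  have "card (S - {e0,e1,e2}) = card S - 3"
    using assms c3 by (simp add: card_Diff_subset)
  then have "t - 1 \<le> card (S - {e0,e1,e2})" using assms(9) by linarith
  then obtain T' where T': "T' \<subseteq> S - {e0,e1,e2}" "card T' = t - 1" and fT': "finite T'"
    by (rule obtain_subset_with_card_n)
  have "\<exists>e\<in>{e0,e1,e2}. (e + \<Sum>T') mod 3 = r mod 3"
  proof -
    have "(0 + (\<Sum>T') mod 3) mod 3 = r mod 3 \<or> (1 + (\<Sum>T') mod 3) mod 3 = r mod 3 \<or> (2 + (\<Sum>T') mod 3) mod 3 = r mod 3"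
      by (rule A3) auto
    then have "(e0 + \<Sum>T') mod 3 = r mod 3 \<or> (e1 + \<Sum>T') mod 3 = r mod 3 \<or> (e2 + \<Sum>T') mod 3 = r mod 3"
      using assms(5-7) modadd[of e0 "\<Sum>T'"] modadd[of e1 "\<Sum>T'"] modadd[of e2 "\<Sum>T'"] by simp
    then show ?thesis by blast
  qed
  then obtain e where e: "e\<in>{e0,e1,e2}" "(e + \<Sum>T') mod 3 = r mod 3" by blast
  have eT: "e \<notin> T'" using e T' by auto
  show ?thesis
  proof (intro exI[of _ "insert e T'"] conjI)
    show "insert e T' \<subseteq> S" using e T' assms by auto
    show "card (insert e T') = t" using eT fT' T' assms by simp
    show "(\<Sum>(insert e T')) mod 3 = r mod 3" using eT fT' e by simp
  qed
qed

lemma G2: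
  fixes S :: "nat set"
  assumes "finite S" "x1\<in>S" "x2\<in>S" "y1\<in>S" "y2\<in>S" "x1\<noteq>x2" "y1\<noteq>y2"
    "x1 mod 3 = x2 mod 3" "y1 mod 3 = y2 mod 3" "x1 mod 3 \<noteq> y1 mod 3"
    "2 \<le> t" "t+2 \<le> card S"
  shows "\<exists>T\<subseteq>S. card T = t \<and> (\<Sum>T) mod 3 = r mod 3"
proof -
  have d: "x1 \<noteq> y1" "x1 \<noteq> y2" "x2 \<noteq> y1" "x2 \<noteq> y2" using assms by auto
  have c4: "card {x1,x2,y1,y2} = 4" using d assms by simp
  have "card (S - {x1,x2,y1,y2}) = card S - 4"
    using assms c4 by (simp add: card_Diff_subset)
  then have "t - 2 \<le> card (S - {x1,x2,y1,y2})" using assms(12) by linarith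
  then obtain T' where T': "T' \<subseteq> S - {x1,x2,y1,y2}" "card T' = t - 2" and fT': "finite T'"
    by (rule obtain_subset_with_card_n)
  have "\<exists>a b. a\<in>{x1,x2,y1,y2} \<and> b\<in>{x1,x2,y1,y2} \<and> a\<noteq>b \<and> (a + b + \<Sum>T') mod 3 = r mod 3"
  proof -
    have "(x1 mod 3 + x1 mod 3 + (\<Sum>T') mod 3) mod 3 = r mod 3 \<or> (x1 mod 3 + y1 mod 3 + (\<Sum>T') mod 3) mod 3 = r mod 3 \<or> (y1 mod 3 + y1 mod 3 + (\<Sum>T') mod 3) mod 3 = r mod 3"
      by (rule B3) (use assms(10) in auto)
    then have "(x1 + x2 + \<Sum>T') mod 3 = r mod 3 \<or> (x1 + y1 + \<Sum>T') mod 3 = r mod 3 \<or> (y1 + y2 + \<Sum>T') mod 3 = r mod 3"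
      using assms(8-9) modadd2[of x1 x2 "\<Sum>T'"] modadd2[of x1 y1 "\<Sum>T'"] modadd2[of y1 y2 "\<Sum>T'"] by simp
    then show ?thesis using d assms(6,7) by blast
  qed
  then obtain a b where ab: "a\<in>{x1,x2,y1,y2}" "b\<in>{x1,x2,y1,y2}" "a\<noteq>b" "(a + b + \<Sum>T') mod 3 = r mod 3" by blast
  have abT: "a \<notin> T'" "b \<notin> T'" using ab T' by auto
  show ?thesis
  proof (intro exI[of _ "insert a (insert b T')"] conjI)
    show "insert a (insert b T') \<subseteq> S" using ab T' assms by auto
    have "card (insert a (insert b T')) = Suc (Suc (card T'))" using abT ab fT' by simp
    then show "card (insert a (insert b T')) = t" using T' assms(11) by simp
    show "(\<Sum>(insert a (insert b T'))) mod 3 = r mod 3" using abT fT' ab by (simp add: add.assoc)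
  qed
qed


definition cls :: "nat set \<Rightarrow> nat \<Rightarrow> nat set" where
  "cls S i = {x\<in>S. x mod 3 = i}"

definition good :: "nat set \<Rightarrow> bool" where
  "good S \<longleftrightarrow> (1 \<le> card (cls S 0) \<and> 1 \<le> card (cls S 1) \<and> 1 \<le> card (cls S 2))
     \<or> (2 \<le> card (cls S 0) \<and> 2 \<le> card (cls S 1))
     \<or> (2 \<le> card (cls S 0) \<and> 2 \<le> card (cls S 2))
     \<or> (2 \<le> card (cls S 1) \<and> 2 \<le> card (cls S 2))"

lemma one_elem: "1 \<le> card A \<Longrightarrow> \<exists>x. x \<in> A"
  by (metis card.empty ex_in_conv not_one_le_zero)

lemma two_elems: "2 \<le> card A \<Longrightarrow> \<exists>x y. x \<in> A \<and> y \<in> A \<and> x \<noteq> y"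
proof -
  assume "2 \<le> card A"
  then obtain B where "B \<subseteq> A" "card B = 2" by (meson obtain_subset_with_card_n)
  then show ?thesis by (auto simp: card_2_iff)
qed

lemma cls_sub: "cls S i \<subseteq> S" by (auto simp: cls_def)
lemma cls_mem: "x \<in> cls S i \<longleftrightarrow> x \<in> S \<and> x mod 3 = i" by (auto simp: cls_def)

lemma G2c:
  fixes S :: "nat set"
  assumes "finite S" "2 \<le> card (cls S a)" "2 \<le> card (cls S b)" "a \<noteq> b"
    "2 \<le> t" "t+2 \<le> card S"
  shows "\<exists>T\<subseteq>S. card T = t \<and> (\<Sum>T) mod 3 = r mod 3"
proof -
  obtain x1 x2 where x: "x1 \<in> cls S a" "x2 \<in> cls S a" "x1 \<noteq> x2" using two_elems assms(2) by blast
  obtain y1 y2 where y: "y1 \<in> cls S b" "y2 \<in> cls S b" "y1 \<noteq> y2" using two_elems assms(3) by blast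
  show ?thesis
    apply (rule G2[of S x1 x2 y1 y2])
    using x y assms by (auto simp: cls_mem)
qed

lemma H:
  fixes S :: "nat set"
  assumes "finite S" "good S" "2 \<le> t" "t+2 \<le> card S"
  shows "\<exists>T\<subseteq>S. card T = t \<and> (\<Sum>T) mod 3 = r mod 3"
  using assms(2) unfolding good_def
proof (elim disjE conjE)
  assume a: "1 \<le> card (cls S 0)" "1 \<le> card (cls S 1)" "1 \<le> card (cls S 2)"
  obtain e0 e1 e2 where "e0 \<in> cls S 0" "e1 \<in> cls S 1" "e2 \<in> cls S 2" using one_elem a by metis
  then show ?thesis
    apply -
    apply (rule G1[of S e0 e1 e2])
    using assms by (auto simp: cls_mem)
next
  assume "2 \<le> card (cls S 0)" "2 \<le> card (cls S 1)"
  then show ?thesis using G2c[of S 0 1 t] assms by auto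
next
  assume "2 \<le> card (cls S 0)" "2 \<le> card (cls S 2)"
  then show ?thesis using G2c[of S 0 2 t] assms by auto
next
  assume "2 \<le> card (cls S 1)" "2 \<le> card (cls S 2)"
  then show ?thesis using G2c[of S 1 2 t] assms by auto
qed

lemma cls_mono: "finite S \<Longrightarrow> P \<subseteq> S \<Longrightarrow> card (cls P i) \<le> card (cls S i)"
  by (rule card_mono) (auto simp: cls_def)

lemma good_mono: "finite S \<Longrightarrow> P \<subseteq> S \<Longrightarrow> good P \<Longrightarrow> good S"
  unfolding good_def using cls_mono[of S P 0] cls_mono[of S P 1] cls_mono[of S P 2] by linarith

lemma cls_diff: "finite W \<Longrightarrow> P \<subseteq> W \<Longrightarrow> card (cls (W - P) i) = card (cls W i) - card (cls P i)"
proof -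
  assume f: "finite W" "P \<subseteq> W"
  have "cls (W - P) i = cls W i - cls P i" by (auto simp: cls_def)
  moreover have "cls P i \<subseteq> cls W i" using f by (auto simp: cls_def)
  moreover have "finite (cls P i)" using f finite_subset cls_sub by (metis)
  ultimately show ?thesis by (simp add: card_Diff_subset)
qed

lemma cls_part: "finite W \<Longrightarrow> card W = card (cls W 0) + card (cls W 1) + card (cls W 2)"
proof -
  assume f: "finite W"
  have W: "W = (cls W 0 \<union> cls W 1) \<union> cls W 2" by (auto simp: cls_def)
  have fin: "finite (cls W i)" for i using f cls_sub finite_subset by metis
  have "card ((cls W 0 \<union> cls W 1) \<union> cls W 2) = card (cls W 0 \<union> cls W 1) + card (cls W 2)"
    by (rule card_Un_disjoint) (use fin in \<open>auto simp: cls_def\<close>)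
  also have "card (cls W 0 \<union> cls W 1) = card (cls W 0) + card (cls W 1)"
    by (rule card_Un_disjoint) (use fin in \<open>auto simp: cls_def\<close>)
  finally show ?thesis using W by simp
qed


lemma good_ab: assumes "a \<noteq> b" "a < 3" "b < 3" "2 \<le> card (cls S a)" "2 \<le> card (cls S b)"
  shows "good S"
proof -
  have "a = 0 \<or> a = 1 \<or> a = 2" "b = 0 \<or> b = 1 \<or> b = 2" using assms by auto
  then show ?thesis using assms unfolding good_def by auto
qed

lemma caseA:
  assumes f: "finite W" and e: "e0 \<in> cls W 0" "e1 \<in> cls W 1" "e2 \<in> cls W 2"
    and c: "(2 \<le> card (cls W 0) \<and> 2 \<le> card (cls W 1) \<and> 2 \<le> card (cls W 2))
     \<or> (3 \<le> card (cls W 0) \<and> 3 \<le> card (cls W 1))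
     \<or> (3 \<le> card (cls W 0) \<and> 3 \<le> card (cls W 2))
     \<or> (3 \<le> card (cls W 1) \<and> 3 \<le> card (cls W 2))"
  shows "\<exists>P\<subseteq>W. good P \<and> good (W - P) \<and> 3 \<le> card P \<and> card P \<le> 4
     \<and> 1 \<le> card (cls P 0) \<and> 1 \<le> card (cls P 1) \<and> 1 \<le> card (cls P 2)"
proof -
  let ?P = "{e0,e1,e2}"
  have m: "e0 mod 3 = 0" "e1 mod 3 = 1" "e2 mod 3 = 2" using e by (auto simp: cls_mem)
  have sub: "?P \<subseteq> W" using e by (auto simp: cls_mem)
  have c0: "cls ?P 0 = {e0}" "cls ?P 1 = {e1}" "cls ?P 2 = {e2}" using m by (auto simp: cls_def)
  have d: "e0 \<noteq> e1" "e0 \<noteq> e2" "e1 \<noteq> e2" using m by auto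
  have cp: "card ?P = 3" using d by simp
  have gp: "good ?P" unfolding good_def using c0 by simp
  have cd: "card (cls (W - ?P) i) = card (cls W i) - 1" if "i < 3" for i
  proof -
    have "i = 0 \<or> i = 1 \<or> i = 2" using that by auto
    then show ?thesis using cls_diff[OF f sub, of i] c0 by auto
  qed
  have gw: "good (W - ?P)" unfolding good_def using c cd[of 0] cd[of 1] cd[of 2] by auto
  show ?thesis by (rule exI[of _ ?P]) (use sub gp gw cp c0 in auto)
qed

lemma caseB:
  assumes f: "finite W" and ab: "a \<noteq> b" "a < 3" "b < 3"
    and c: "4 \<le> card (cls W a)" "4 \<le> card (cls W b)"
  shows "\<exists>P\<subseteq>W. good P \<and> good (W - P) \<and> 3 \<le> card P \<and> card P \<le> 4"
proof -
  have "2 \<le> card (cls W a)" using c by simp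
  then obtain Pa where Pa: "Pa \<subseteq> cls W a" "card Pa = 2" "finite Pa" by (meson obtain_subset_with_card_n)
  have "2 \<le> card (cls W b)" using c by simp
  then obtain Pb where Pb: "Pb \<subseteq> cls W b" "card Pb = 2" "finite Pb" by (meson obtain_subset_with_card_n)
  let ?P = "Pa \<union> Pb"
  have sub: "?P \<subseteq> W" using Pa Pb cls_sub by blast
  have clA: "cls ?P a = Pa" using Pa Pb ab by (auto simp: cls_def)
  have clB: "cls ?P b = Pb" using Pa Pb ab by (auto simp: cls_def)
  have dis: "Pa \<inter> Pb = {}" using Pa Pb ab by (auto simp: cls_def)
  have cp: "card ?P = 4" using card_Un_disjoint[OF Pa(3) Pb(3) dis] Pa Pb by simp
  have gp: "good ?P" using good_ab[OF ab] clA clB Pa Pb by simp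
  have "card (cls (W - ?P) a) \<ge> 2" using cls_diff[OF f sub, of a] clA Pa c by simp
  moreover have "card (cls (W - ?P) b) \<ge> 2" using cls_diff[OF f sub, of b] clB Pb c by simp
  ultimately have gw: "good (W - ?P)" using good_ab[OF ab] by simp
  show ?thesis by (rule exI[of _ ?P]) (use sub gp gw cp in auto)
qed

lemma claim:
  assumes f: "finite W" and q: "2 \<le> q" and cW: "3*q+2 \<le> card W"
    and b: "card (cls W 0) \<le> 2*q" "card (cls W 1) \<le> 2*q" "card (cls W 2) \<le> 2*q"
  shows "\<exists>P\<subseteq>W. good P \<and> good (W - P) \<and> 3 \<le> card P \<and> card P \<le> 4"
proof -
  have s: "card W = card (cls W 0) + card (cls W 1) + card (cls W 2)" using cls_part[OF f] .
  show ?thesis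
  proof (cases "1 \<le> card (cls W 0) \<and> 1 \<le> card (cls W 1) \<and> 1 \<le> card (cls W 2)")
    case True
    then obtain e0 e1 e2 where "e0 \<in> cls W 0" "e1 \<in> cls W 1" "e2 \<in> cls W 2" using one_elem by metis
    moreover have "(2 \<le> card (cls W 0) \<and> 2 \<le> card (cls W 1) \<and> 2 \<le> card (cls W 2))
     \<or> (3 \<le> card (cls W 0) \<and> 3 \<le> card (cls W 1))
     \<or> (3 \<le> card (cls W 0) \<and> 3 \<le> card (cls W 2))
     \<or> (3 \<le> card (cls W 1) \<and> 3 \<le> card (cls W 2))" using True s cW b q by linarith
    ultimately show ?thesis using caseA[OF f] by meson
  next
    case False
    then have "card (cls W 0) = 0 \<or> card (cls W 1) = 0 \<or> card (cls W 2) = 0" by linarith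
    then show ?thesis
    proof (elim disjE)
      assume "card (cls W 0) = 0"
      then show ?thesis using caseB[OF f, of 1 2] s cW b q by simp
    next
      assume "card (cls W 1) = 0"
      then show ?thesis using caseB[OF f, of 0 2] s cW b q by simp
    next
      assume "card (cls W 2) = 0"
      then show ?thesis using caseB[OF f, of 0 1] s cW b q by simp
    qed
  qed
qed

lemma cls_N: assumes "i < 3" shows "card (cls {0..<6*q} i) = 2*q"
proof -
  have "cls {0..<6*q} i = (\<lambda>y. 3*y+i) ` {0..<2*q}"
  proof
    show "cls {0..<6*q} i \<subseteq> (\<lambda>y. 3*y+i) ` {0..<2*q}"
    proof
      fix x assume "x \<in> cls {0..<6*q} i"
      then have x: "x < 6*q" "x mod 3 = i" by (auto simp: cls_def)
      then have "x = 3*(x div 3) + i" using div_mult_mod_eq[of x 3] by linarith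
      moreover have "x div 3 < 2*q" using x(1) by simp
      ultimately show "x \<in> (\<lambda>y. 3*y+i) ` {0..<2*q}" by (metis atLeastLessThan_iff image_eqI zero_le)
    qed
  next
    show "(\<lambda>y. 3*y+i) ` {0..<2*q} \<subseteq> cls {0..<6*q} i"
      using assms by (auto simp: cls_def)
  qed
  moreover have "inj_on (\<lambda>y. 3*y+i) {0..<2*q}" by (auto simp: inj_on_def)
  ultimately show ?thesis by (simp add: card_image)
qed

lemma tgt: fixes a b :: nat assumes "b mod 3 = (4 - a mod 3) mod 3" shows "(a + b) mod 3 = 1"
proof -
  have "a mod 3 = 0 \<or> a mod 3 = 1 \<or> a mod 3 = 2" by auto
  then show ?thesis using assms modadd[of a b] by auto
qed


lemma H1:
  fixes S :: "nat set"
  assumes "finite S" "1 \<le> card (cls S 0)" "1 \<le> card (cls S 1)" "1 \<le> card (cls S 2)" "1 \<le> t" "t+2 \<le> card S"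
  shows "\<exists>T\<subseteq>S. card T = t \<and> (\<Sum>T) mod 3 = r mod 3"
proof -
  obtain e0 e1 e2 where "e0 \<in> cls S 0" "e1 \<in> cls S 1" "e2 \<in> cls S 2" using one_elem assms(2-4) by metis
  then show ?thesis
    apply -
    apply (rule G1[of S e0 e1 e2])
    using assms by (auto simp: cls_mem)
qed

lemma tgt2: fixes a b c :: nat assumes "(a + b) mod 3 = 1" "b mod 3 = c mod 3" shows "(c + a) mod 3 = 1"
proof -
  have "(c + a) mod 3 = (c mod 3 + a mod 3) mod 3" by (rule modadd)
  also have "\<dots> = (a mod 3 + b mod 3) mod 3" using assms(2) by (simp add: add.commute)
  also have "\<dots> = (a + b) mod 3" by (rule modadd[symmetric])
  finally show ?thesis using assms(1) by simp
qed

theorem mainTheorem9: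
  fixes k :: nat and X :: "nat set"
  assumes "k \<ge> 6" and "even k" and "k mod 3 = 0"
    and "X \<subseteq> {0..<2*k}" and "1 \<le> card X" and "card X \<le> k - 2"
  shows "X \<in> diff_family {R. R \<subseteq> {0..<2*k} \<and> card R = k \<and> (\<Sum>x\<in>R. x) mod 3 = 1}"
proof -
  define q where "q = k div 3"
  have kq: "k = 3*q" using assms(3) unfolding q_def by auto
  have q2: "2 \<le> q" using kq assms(1) by linarith
  have N: "{0..<2*k} = {0..<6*q}" using kq by simp
  define m where "m = card X"
  have fX: "finite X" using assms(4) finite_subset by blast
  define W where "W = {0..<2*k} - X"
  have fW: "finite W" unfolding W_def by simp
  have cW: "card W = 2*k - m" unfolding W_def m_def using assms(4) fX by (simp add: card_Diff_subset)
  have cW2: "3*q+2 \<le> card W" using cW kq assms(1,6) m_def by linarith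
  have bnd: "card (cls W i) \<le> 2*q" if "i < 3" for i
  proof -
    have "card (cls W i) \<le> card (cls {0..<6*q} i)"
      by (rule cls_mono) (auto simp: W_def N)
    then show ?thesis using cls_N[OF that] by simp
  qed
  have Pex: "\<exists>P\<subseteq>W. good P \<and> good (W - P) \<and> 3 \<le> card P \<and> card P \<le> 4
     \<and> (m = 1 \<longrightarrow> 1 \<le> card (cls P 0) \<and> 1 \<le> card (cls P 1) \<and> 1 \<le> card (cls P 2))"
  proof (cases "m = 1")
    case False
    then show ?thesis using claim[OF fW q2 cW2 bnd[of 0] bnd[of 1] bnd[of 2]] by auto
  next
    case True
    have lb: "2 \<le> card (cls W i)" if "i < 3" for i
    proof -
      have "card (cls W i) = card (cls {0..<6*q} i) - card (cls X i)"
        unfolding W_def N using cls_diff[of "{0..<6*q}" X i] assms(4) N by simp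
      moreover have "card (cls X i) \<le> card X" using fX by (intro card_mono) (auto simp: cls_def)
      ultimately show ?thesis using cls_N[OF that, of q] True m_def q2 by linarith
    qed
    have l: "1 \<le> card (cls W 0)" "1 \<le> card (cls W 1)" "1 \<le> card (cls W 2)"
      using lb[of 0] lb[of 1] lb[of 2] by auto
    obtain e0 e1 e2 where "e0 \<in> cls W 0" "e1 \<in> cls W 1" "e2 \<in> cls W 2"
      using one_elem[OF l(1)] one_elem[OF l(2)] one_elem[OF l(3)] by blast
    then show ?thesis using caseA[OF fW, of e0 e1 e2] lb[of 0] lb[of 1] lb[of 2] by auto
  qed
  then obtain P where P: "P \<subseteq> W" "good P" "good (W - P)" "3 \<le> card P" "card P \<le> 4"
    and P1: "m = 1 \<longrightarrow> 1 \<le> card (cls P 0) \<and> 1 \<le> card (cls P 1) \<and> 1 \<le> card (cls P 2)"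
    by blast
  have fP: "finite P" using P(1) fW finite_subset by blast
  have cWP: "card (W - P) = card W - card P" using P(1) fP by (simp add: card_Diff_subset)
  obtain R2 where R2: "R2 \<subseteq> W - P" "card R2 = k - card P" "(\<Sum>R2) mod 3 = (4 - (\<Sum>P) mod 3) mod 3"
  proof -
    have t1: "2 \<le> k - card P" using P(5) kq q2 by linarith
    have t2: "k - card P + 2 \<le> card (W - P)" using cWP cW2 P(5) cW kq q2 assms(1,6) m_def by linarith
    have fWP: "finite (W - P)" using fW by simp
    from H[OF fWP P(3) t1 t2, of "4 - (\<Sum>P) mod 3"] show ?thesis
      using that by (metis mod_mod_trivial)
  qed
  define R' where "R' = P \<union> R2"
  have fR2: "finite R2" using R2(1) fW finite_subset by blast
  have dis: "P \<inter> R2 = {}" using R2(1) by auto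
  have cR': "card R' = k" unfolding R'_def using card_Un_disjoint[OF fP fR2 dis] R2(2) P(5) kq q2 by simp
  have sR': "(\<Sum>R') mod 3 = 1" unfolding R'_def using sum.union_disjoint[OF fP fR2 dis, of "\<lambda>x. x"] tgt[OF R2(3)] by simp
  have R'W: "R' \<subseteq> W" unfolding R'_def using P(1) R2(1) by auto
  have fR': "finite R'" unfolding R'_def using fP fR2 by simp
  have gR': "good R'" using good_mono[OF fR' _ P(2)] unfolding R'_def by simp
  obtain B where B: "B \<subseteq> R'" "card B = m" "(\<Sum>B) mod 3 = (\<Sum>X) mod 3"
  proof -
    have t2: "m + 2 \<le> card R'" using cR' assms(1,6) m_def by linarith
    show ?thesis
    proof (cases "m = 1")
      case True
      have c: "1 \<le> card (cls R' i)" if "i = 0 \<or> i = 1 \<or> i = 2" for i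
      proof -
        have "card (cls P i) \<le> card (cls R' i)" by (rule cls_mono[OF fR']) (auto simp: R'_def)
        then show ?thesis using P1 True that by auto
      qed
      from H1[OF fR' c[of 0] c[of 1] c[of 2] _ t2, of "\<Sum>X"] True show ?thesis
        using that by auto
    next
      case False
      then have t1: "2 \<le> m" using assms(5) m_def by linarith
      from H[OF fR' gR' t1 t2, of "\<Sum>X"] show ?thesis using that by auto
    qed
  qed
  define A where "A = R' - B"
  have fB: "finite B" using B(1) fR' finite_subset by blast
  have cA: "card A = k - m" unfolding A_def using B fB cR' by (simp add: card_Diff_subset)
  have sAB: "\<Sum>R' = \<Sum>A + \<Sum>B" unfolding A_def using sum.subset_diff[OF B(1) fR', of "\<lambda>x. x"] by simp
  have sA: "(\<Sum>X + \<Sum>A) mod 3 = 1" using tgt2[of "\<Sum>A" "\<Sum>B" "\<Sum>X"] sR' sAB B(3) by simp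
  have A1: "A \<subseteq> R'" unfolding A_def by auto
  define R where "R = X \<union> A"
  have fA: "finite A" using A1 fR' finite_subset by blast
  have disA: "X \<inter> A = {}" using A1 R'W unfolding W_def by auto
  have cR: "card R = k" unfolding R_def using card_Un_disjoint[OF fX fA disA] cA m_def assms(6) kq q2 by simp
  have sR: "(\<Sum>R) mod 3 = 1" unfolding R_def using sum.union_disjoint[OF fX fA disA, of "\<lambda>x. x"] sA by simp
  have RN: "R \<subseteq> {0..<2*k}" unfolding R_def using assms(4) A1 R'W unfolding W_def by auto
  have R'N: "R' \<subseteq> {0..<2*k}" using R'W unfolding W_def by auto
  have XR: "X = R - R'" unfolding R_def using A1 R'W unfolding W_def by auto
  show ?thesis unfolding diff_family_def
    using RN R'N cR cR' sR sR' XR by blast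
qed

end
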